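(* For $q\in\mathbb{C}$ with $|q|<1$ and each integer $n\ge0$, let $$K_{n,q}=[2]_q\left(\frac{1}{1-q}\right)^n\sum_{l=0}^n\binom nl(-1)^l\frac{1}{1+q^{l+1}}.$$ Then for every $n\ge 0$, $\lim_{q\to1}K_{n,q}=E_n$, where the Euler numbers $E_n$ are defined by $\frac{2}{e^t+1}=\sum_{n=0}^\infty E_n\frac{t^n}{n!}$ for $|t|<\pi$.
   Context: For $q\in\mathbb{C}$ with $|q|<1$, $[2]_q=1+q$. The limit is taken with $q$ in the open unit disk tending to $1$. *)

theory Defs
  imports "HOL-Analysis.Analysis"
begin

definition q_two :: "complex \<Rightarrow> complex" where
  "q_two q = 1 + q"

definition K_nq :: "nat \<Rightarrow> complex \<Rightarrow> complex" where
  "K_nq n q = q_two q * (1 / (1 - q)) ^ n *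
     (\<Sum>l = 0..n. of_nat (n choose l) * (-1) ^ l * (1 / (1 + q ^ (l + 1))))"

definition euler_E :: "nat \<Rightarrow> real" where
  "euler_E = (THE E. \<forall>t::real. \<bar>t\<bar> < pi \<longrightarrow>
       (\<lambda>n. E n * t ^ n / fact n) sums (2 / (exp t + 1)))"

end

theory Submission imports Defs "HOL-Complex_Analysis.Complex_Analysis" begin

lemma binom_aux:
  fixes x :: complex
  assumes "l \<le> n"
  shows "(\<Sum>k=0..n. of_nat (n choose k) * of_nat (k choose l) * x^k) = of_nat (n choose l) * x^l * (1+x)^(n-l)"
proof -
  have "(\<Sum>k=0..n. of_nat (n choose k) * of_nat (k choose l) * x^k) = (\<Sum>k=l..n. of_nat (n choose k) * of_nat (k choose l) * x^k)"
    by (rule sum.mono_neutral_right) auto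
  also have "\<dots> = (\<Sum>j=0..n-l. of_nat (n choose (j+l)) * of_nat ((j+l) choose l) * x^(j+l))"
    using sum.shift_bounds_cl_nat_ivl[of "\<lambda>k. of_nat (n choose k) * of_nat (k choose l) * x^k" 0 l "n-l"] assms by simp
  also have "\<dots> = (\<Sum>j=0..n-l. of_nat (n choose l) * x^l * (of_nat ((n-l) choose j) * x^j))"
  proof (rule sum.cong[OF refl])
    fix j assume j: "j \<in> {0..n-l}"
    have "(n choose (j+l)) * ((j+l) choose l) = (n choose l) * ((n - l) choose (j + l - l))"
      by (rule choose_mult) (use j assms in auto)
    then have "(of_nat (n choose (j+l)) * of_nat ((j+l) choose l) :: complex) = of_nat (n choose l) * of_nat ((n-l) choose j)"
      by (metis add_diff_cancel_right' of_nat_mult)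
    then show "of_nat (n choose (j+l)) * of_nat ((j+l) choose l) * x^(j+l) = of_nat (n choose l) * x^l * (of_nat ((n-l) choose j) * x^j)"
      by (simp add: power_add algebra_simps)
  qed
  also have "\<dots> = of_nat (n choose l) * x^l * (\<Sum>j=0..n-l. of_nat ((n-l) choose j) * x^j)"
    by (simp add: sum_distrib_left)
  also have "(\<Sum>j=0..n-l. of_nat ((n-l) choose j) * x^j) = (x+1)^(n-l)"
    using binomial_ring[of x 1 "n-l"] by (simp add: atLeast0AtMost)
  finally show ?thesis by (simp add: add.commute)
qed

lemma K_rec:
  fixes q :: complex
  assumes q: "norm q < 1"
  shows "q * (\<Sum>k=0..n. of_nat (n choose k) * q^k * K_nq k q) + K_nq n q = (if n = 0 then 1 + q else 0)"
proof -
  define u where "u = 1/(1-q)"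
  define a where "a l = 1/(1 + q^(l+1))" for l
  define S where "S k = (\<Sum>l=0..k. of_nat (k choose l) * (-1)^l * a l)" for k
  define x where "x = q * u"
  have q1: "q \<noteq> 1" using q by auto
  have ux: "1 + x = u" unfolding x_def u_def using q1 by (simp add: field_simps)
  have an: "1 + q^(l+1) \<noteq> 0" for l
  proof
    assume "1 + q^(l+1) = 0"
    then have "q^(l+1) = -1" by (simp add: add_eq_0_iff)
    then have "norm (q^(l+1)) = 1" by simp
    moreover have "norm (q^(l+1)) < 1"
    proof -
      have "norm q ^ (l+1) \<le> norm q ^ 1"
        by (rule power_decreasing) (use q in auto)
      then show ?thesis using q by (simp add: norm_power del: power_Suc)
    qed
    ultimately show False by simp
  qed
  have K: "K_nq k q = (1+q) * u^k * S k" for k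
    unfolding K_nq_def q_two_def u_def S_def a_def by simp
  have Sext: "S k = (\<Sum>l=0..n. of_nat (k choose l) * (-1)^l * a l)" if "k \<le> n" for k
    unfolding S_def by (rule sum.mono_neutral_left) (use that in auto)
  have L0: "(\<Sum>k=0..n. of_nat (n choose k) * q^k * K_nq k q) = (1+q) * (\<Sum>k=0..n. of_nat (n choose k) * x^k * S k)"
    unfolding K x_def by (simp add: sum_distrib_left power_mult_distrib algebra_simps)
  have "(\<Sum>k=0..n. of_nat (n choose k) * x^k * S k) = (\<Sum>k=0..n. \<Sum>l=0..n. of_nat (n choose k) * x^k * (of_nat (k choose l) * (-1)^l * a l))"
    by (rule sum.cong[OF refl]) (simp add: Sext sum_distrib_left)
  also have "\<dots> = (\<Sum>l=0..n. \<Sum>k=0..n. of_nat (n choose k) * x^k * (of_nat (k choose l) * (-1)^l * a l))"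
    by (rule sum.swap)
  also have "\<dots> = (\<Sum>l=0..n. (-1)^l * a l * (\<Sum>k=0..n. of_nat (n choose k) * of_nat (k choose l) * x^k))"
    by (simp add: sum_distrib_left algebra_simps)
  also have "\<dots> = (\<Sum>l=0..n. (-1)^l * a l * (of_nat (n choose l) * q^l * u^n))"
  proof (rule sum.cong[OF refl])
    fix l assume l: "l \<in> {0..n}"
    have "x^l * (1+x)^(n-l) = q^l * u^n"
    proof -
      have "x^l * (1+x)^(n-l) = q^l * (u^l * u^(n-l))"
        unfolding ux by (simp add: x_def power_mult_distrib)
      also have "u^l * u^(n-l) = u^n" using l by (simp flip: power_add)
      finally show ?thesis .
    qed
    then show "(-1)^l * a l * (\<Sum>k=0..n. of_nat (n choose k) * of_nat (k choose l) * x^k) = (-1)^l * a l * (of_nat (n choose l) * q^l * u^n)"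
      using l binom_aux[of l n x] by (simp add: mult.assoc)
  qed
  finally have L1: "(\<Sum>k=0..n. of_nat (n choose k) * x^k * S k) = u^n * (\<Sum>l=0..n. (-1)^l * a l * of_nat (n choose l) * q^l)"
    by (simp add: sum_distrib_left algebra_simps)
  have "u \<noteq> 0" using q1 by (simp add: u_def)
  then have L: "(\<Sum>k=0..n. of_nat (n choose k) * q^k * K_nq k q) = (1+q) * u^n * (\<Sum>l=0..n. (-1)^l * a l * of_nat (n choose l) * q^l)"
    unfolding L0 L1 by (simp add: mult.assoc)
  have "q * (\<Sum>k=0..n. of_nat (n choose k) * q^k * K_nq k q) + K_nq n q
      = (1+q) * u^n * (\<Sum>l=0..n. of_nat (n choose l) * (-1)^l * (a l * (q^(l+1) + 1)))"
    unfolding L K[of n] S_def by (simp add: sum_distrib_left sum.distrib[symmetric] algebra_simps)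
  also have "\<dots> = (1+q) * u^n * (\<Sum>l=0..n. (-1)^l * of_nat (n choose l))"
    using an by (simp add: a_def add.commute mult.commute)
  also have "\<dots> = (if n = 0 then 1 + q else 0)"
    using choose_alternating_sum[of n, where 'a=complex] by (simp add: atLeast0AtMost)
  finally show ?thesis .
qed

lemma exp_ne:
  fixes z :: complex
  assumes "norm z < pi"
  shows "exp z + 1 \<noteq> 0"
proof
  assume "exp z + 1 = 0"
  then have "exp z = -1" by (simp add: eq_neg_iff_add_eq_0)
  then have "exp (z + \<i> * of_real pi) = 1" by (simp add: exp_add)
  then obtain m :: int where m: "Im (z + \<i> * of_real pi) = of_int (2*m) * pi"
    by (auto simp: exp_eq_1)
  then have "Im z = (2 * of_int m - 1) * pi" by (simp add: algebra_simps)
  moreover have "\<bar>Im z\<bar> < pi" using abs_Im_le_cmod[of z] assms by linarith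
  ultimately have "\<bar>2 * of_int m - 1\<bar> * pi < 1 * pi" by (simp add: abs_mult)
  then have "\<bar>2 * of_int m - 1 :: real\<bar> < 1" by (simp only: mult_less_cancel_right) (use pi_gt_zero in auto)
  then have "\<bar>2 * m - 1\<bar> < 1" by linarith
  then show False by presburger
qed

definition Ef :: "complex \<Rightarrow> complex" where "Ef z = 2 / (exp z + 1)"

lemma Ef_hol: "Ef holomorphic_on ball 0 pi"
  unfolding Ef_def by (intro holomorphic_intros) (auto simp: exp_ne)

lemma Ef_sums:
  fixes t :: real
  assumes "\<bar>t\<bar> < pi"
  shows "(\<lambda>n. Re ((deriv ^^ n) Ef 0) * t ^ n / fact n) sums (2 / (exp t + 1))"
proof -
  have "(\<lambda>n. (deriv ^^ n) Ef 0 / fact n * (of_real t - 0)^n) sums Ef (of_real t)"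
    by (rule holomorphic_power_series[OF Ef_hol]) (use assms in auto)
  have tm: "Re ((deriv ^^ n) Ef 0 / fact n * (of_real t - 0)^n) = Re ((deriv ^^ n) Ef 0) * t ^ n / fact n" for n
  proof -
    have "(deriv ^^ n) Ef 0 / fact n * (of_real t - 0)^n = (deriv ^^ n) Ef 0 * of_real (t^n) / of_real (fact n)"
      by (simp add: of_real_power)
    then show ?thesis by (simp only: Re_divide_of_real) simp
  qed
  have ev: "Re (Ef (of_real t)) = 2 / (exp t + 1)"
  proof -
    have "Ef (of_real t) = of_real (2 / (exp t + 1))"
      by (simp add: Ef_def exp_of_real)
    then show ?thesis by simp
  qed
  from sums_Re[OF \<open>_ sums _\<close>] show ?thesis
    unfolding tm ev .
qed

lemma powser_uniq:
  fixes a :: "nat \<Rightarrow> real"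
  assumes r: "r > 0" and s: "\<And>t. \<bar>t\<bar> < r \<Longrightarrow> (\<lambda>n. a n * t ^ n) sums 0"
  shows "a n = 0"
proof (induction n rule: less_induct)
  case (less m)
  define g where "g t = (\<Sum>k. a (k + m) * t ^ k)" for t
  have sh: "(\<lambda>k. a (k + m) * t ^ k) sums 0" if t: "\<bar>t\<bar> < r" "t \<noteq> 0" for t
  proof -
    have "(\<Sum>i<m. a i * t ^ i) = 0" using less by simp
    then have "(\<lambda>k. a (k + m) * t ^ (k + m)) sums 0"
      using sums_iff_shift[of "\<lambda>i. a i * t ^ i" m 0] s[OF t(1)] by simp
    then have "(\<lambda>k. a (k + m) * t ^ (k + m) / t ^ m) sums (0 / t ^ m)"
      by (rule sums_divide)
    then show ?thesis using t by (simp add: power_add)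
  qed
  have summ: "summable (\<lambda>k. a (k + m) * (r/2) ^ k)"
    using sh[of "r/2"] r by (auto simp: sums_iff)
  have "isCont g 0"
    unfolding g_def by (rule isCont_powser[OF summ]) (use r in simp)
  then have "(g \<longlongrightarrow> g 0) (at 0)" by (simp add: isCont_def)
  moreover have "eventually (\<lambda>t. g t = 0) (at (0::real))"
  proof -
    have "eventually (\<lambda>t. t \<in> ball 0 r) (nhds (0::real))"
      by (rule eventually_nhds_in_open) (use r in auto)
    then show ?thesis unfolding eventually_at_filter
      by (rule eventually_mono) (auto simp: g_def intro: sums_unique[symmetric] sh)
  qed
  ultimately have "((\<lambda>t. 0) \<longlongrightarrow> g 0) (at (0::real))"
    by (rule Lim_transform_eventually)
  then have "g 0 = 0" using tendsto_const_iff by (metis at_neq_bot tendsto_unique tendsto_const)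
  then show ?case unfolding g_def by simp
qed

lemma euler_E_eq: "euler_E = (\<lambda>n. Re ((deriv ^^ n) Ef 0))"
  unfolding euler_E_def
proof (rule the_equality)
  show "\<forall>t::real. \<bar>t\<bar> < pi \<longrightarrow> (\<lambda>n. Re ((deriv ^^ n) Ef 0) * t ^ n / fact n) sums (2 / (exp t + 1))"
    using Ef_sums by blast
next
  fix E :: "nat \<Rightarrow> real"
  assume E: "\<forall>t::real. \<bar>t\<bar> < pi \<longrightarrow> (\<lambda>n. E n * t ^ n / fact n) sums (2 / (exp t + 1))"
  have "(E n - Re ((deriv ^^ n) Ef 0)) / fact n = 0" for n
  proof (rule powser_uniq[of pi])
    fix t :: real assume t: "\<bar>t\<bar> < pi"
    have "(\<lambda>n. E n * t ^ n / fact n - Re ((deriv ^^ n) Ef 0) * t ^ n / fact n) sums (2 / (exp t + 1) - 2 / (exp t + 1))"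
      by (rule sums_diff) (use E t Ef_sums in auto)
    then show "(\<lambda>n. (E n - Re ((deriv ^^ n) Ef 0)) / fact n * t ^ n) sums 0"
      by (simp add: field_simps)
  qed simp
  then show "E = (\<lambda>n. Re ((deriv ^^ n) Ef 0))" by (auto simp: fun_eq_iff)
qed

lemma higher_deriv_exp: "(deriv ^^ k) (exp :: complex \<Rightarrow> complex) = exp"
proof (induction k)
  case (Suc k)
  have "deriv (exp :: complex \<Rightarrow> complex) = exp"
    by (simp add: fun_eq_iff DERIV_imp_deriv[OF DERIV_exp])
  then show ?case using Suc by simp
qed simp

lemma D_rec:
  "(\<Sum>i=0..n. of_nat (n choose i) * (deriv ^^ i) Ef 0) + (deriv ^^ n) Ef 0 = (if n = 0 then 2 else 0)"
proof -
  have op: "open (ball (0::complex) pi)" by simp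
  have z: "(0::complex) \<in> ball 0 pi" by simp
  have h2: "(\<lambda>w. exp w + 1) holomorphic_on ball (0::complex) pi" by (intro holomorphic_intros)
  have "eventually (\<lambda>w. w \<in> ball (0::complex) pi) (nhds 0)"
    by (rule eventually_nhds_in_open) auto
  then have ev: "eventually (\<lambda>w. Ef w * (exp w + 1) = 2) (nhds 0)"
  proof (rule eventually_mono)
    fix w :: complex assume "w \<in> ball 0 pi"
    then have "exp w + 1 \<noteq> 0" by (intro exp_ne) simp
    then show "Ef w * (exp w + 1) = 2" unfolding Ef_def by (metis nonzero_eq_divide_eq)
  qed
  have "(deriv ^^ n) (\<lambda>w. Ef w * (exp w + 1)) 0 = (deriv ^^ n) (\<lambda>w. 2) 0"
    by (rule higher_deriv_cong_ev[OF ev refl])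
  also have "\<dots> = (if n = 0 then 2 else 0)" by simp
  finally have A: "(deriv ^^ n) (\<lambda>w. Ef w * (exp w + 1)) 0 = (if n = 0 then 2 else 0)" .
  have B: "(deriv ^^ k) (\<lambda>w. exp w + 1) (0::complex) = (if k = 0 then 2 else 1)" for k
  proof -
    have "(deriv ^^ k) (\<lambda>w. exp w + 1) (0::complex) = (deriv ^^ k) exp 0 + (deriv ^^ k) (\<lambda>w. 1) 0"
      by (rule higher_deriv_add[OF _ _ op z]) (auto intro: holomorphic_intros)
    then show ?thesis by (simp add: higher_deriv_exp)
  qed
  have "(deriv ^^ n) (\<lambda>w. Ef w * (exp w + 1)) 0 = (\<Sum>i=0..n. of_nat (n choose i) * (deriv ^^ i) Ef 0 * (deriv ^^ (n-i)) (\<lambda>w. exp w + 1) 0)"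
    by (rule higher_deriv_mult[OF Ef_hol h2 op z])
  also have "\<dots> = (\<Sum>i=0..n. of_nat (n choose i) * (deriv ^^ i) Ef 0 + (if i = n then (deriv ^^ n) Ef 0 else 0))"
    by (rule sum.cong[OF refl]) (auto simp: B mult_2_right distrib_left)
  also have "\<dots> = (\<Sum>i=0..n. of_nat (n choose i) * (deriv ^^ i) Ef 0) + (deriv ^^ n) Ef 0"
    by (simp add: sum.distrib)
  finally show ?thesis using A by simp
qed

lemma E_rec:
  "(\<Sum>i<n. real (n choose i) * euler_E i) + 2 * euler_E n = (if n = 0 then 2 else 0)"
proof -
  have "Re ((\<Sum>i=0..n. of_nat (n choose i) * (deriv ^^ i) Ef 0) + (deriv ^^ n) Ef 0) = (if n = 0 then 2 else 0)"
    by (simp only: D_rec) simp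
  then have "(\<Sum>i=0..n. real (n choose i) * euler_E i) + euler_E n = (if n = 0 then 2 else 0)"
    by (simp add: euler_E_eq Re_sum)
  moreover have "(\<Sum>i=0..n. real (n choose i) * euler_E i) = (\<Sum>i<n. real (n choose i) * euler_E i) + euler_E n"
    by (simp add: atLeast0AtMost lessThan_Suc_atMost[symmetric])
  ultimately show ?thesis by simp
qed

lemma den_ne:
  fixes q :: complex
  assumes q: "norm q < 1"
  shows "1 + q^(l+1) \<noteq> 0"
proof
  assume "1 + q^(l+1) = 0"
  then have "q^(l+1) = -1" by (simp add: eq_neg_iff_add_eq_0 add.commute)
  then have "norm (q^(l+1)) = 1" by simp
  moreover have "norm (q^(l+1)) < 1"
  proof -
    have "norm q ^ (l+1) \<le> norm q ^ 1"
      by (rule power_decreasing) (use q in auto)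
    then show ?thesis using q by (simp add: norm_power del: power_Suc)
  qed
  ultimately show False by simp
qed

theorem mainTheorem4:
  fixes n :: nat
  shows "(K_nq n \<longlongrightarrow> complex_of_real (euler_E n)) (at 1 within ball 0 1)"
proof (induction n rule: less_induct)
  case (less n)
  define c :: complex where "c = (if n = 0 then 1 else 0)"
  have inb: "eventually (\<lambda>q. q \<in> ball (0::complex) 1) (at 1 within ball 0 1)"
    by (auto simp: eventually_at_filter)
  have ev: "eventually (\<lambda>q. (c * (1+q) - q * (\<Sum>k<n. of_nat (n choose k) * q^k * K_nq k q)) / (1 + q^(n+1)) = K_nq n q) (at 1 within ball 0 1)"
  proof (rule eventually_mono[OF inb])
    fix q :: complex assume "q \<in> ball 0 1"
    then have q: "norm q < 1" by simp
    have "(\<Sum>k=0..n. of_nat (n choose k) * q^k * K_nq k q) = (\<Sum>k<n. of_nat (n choose k) * q^k * K_nq k q) + q^n * K_nq n q"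
      by (simp add: atLeast0AtMost lessThan_Suc_atMost[symmetric])
    with K_rec[OF q, of n] have "q * (\<Sum>k<n. of_nat (n choose k) * q^k * K_nq k q) + (1 + q^(n+1)) * K_nq n q = c * (1 + q)"
      by (simp add: c_def algebra_simps)
    then show "(c * (1+q) - q * (\<Sum>k<n. of_nat (n choose k) * q^k * K_nq k q)) / (1 + q^(n+1)) = K_nq n q"
      using den_ne[OF q, of n] by (simp add: field_simps)
  qed
  have lim: "((\<lambda>q. (c * (1+q) - q * (\<Sum>k<n. of_nat (n choose k) * q^k * K_nq k q)) / (1 + q^(n+1))) \<longlongrightarrow>
      (c * (1+1) - 1 * (\<Sum>k<n. of_nat (n choose k) * 1^k * complex_of_real (euler_E k))) / (1 + 1^(n+1))) (at 1 within ball 0 1)"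
    by (intro tendsto_intros less.IH) auto
  have val: "(c * (1+1) - 1 * (\<Sum>k<n. of_nat (n choose k) * 1^k * complex_of_real (euler_E k))) / (1 + 1^(n+1)) = complex_of_real (euler_E n)"
  proof -
    have "(if n = 0 then 2 else 0) - (\<Sum>k<n. real (n choose k) * euler_E k) = 2 * euler_E n"
      using E_rec[of n] by simp
    then have "complex_of_real ((if n = 0 then 2 else 0) - (\<Sum>k<n. real (n choose k) * euler_E k)) = complex_of_real (2 * euler_E n)"
      by simp
    then have "c * 2 - (\<Sum>k<n. of_nat (n choose k) * complex_of_real (euler_E k)) = 2 * complex_of_real (euler_E n)"
      by (cases "n = 0") (simp_all add: c_def of_real_sum)
    then show ?thesis by simp
  qed
  show ?case using Lim_transform_eventually[OF lim ev] unfolding val .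
qed

end
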